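(* Let $A\in\mathbb{R}^{n\times n}$ have rank one. Then $A$ is a Karamardian matrix if and only if $(A^{\dagger})^T$ is a Karamardian matrix. Moreover, if $A$ is Karamardian then both $A^T$ and $A^{\dagger}$ are row monotone.
   Context: $A^{\dagger}$ denotes the Moore–Penrose inverse of $A$. A square matrix $M$ is row monotone if $Mx\ge 0$ and $x\in R(M^T)$ imply $x\ge 0$. For $A\in\mathbb{R}^{n\times n}$ let $K_A=\mathbb{R}^n_+\cap R(A)$ and $K_A^*=\{y\in\mathbb{R}^n: x^Ty\ge 0 \text{ for all } x\in K_A\}$ (one has $K_A^*=\mathbb{R}^n_++N(A^T)$, and its interior is $\{a+b: a>0,\ b\in N(A^T)\}$). For $q\in\mathbb{R}^n$, LCP$(A,K_A,q)$ is to find $x$ with $x\in K_A$, $Ax+q\in K_A^*$, $x^T(Ax+q)=0$. $A$ is a Karamardian matrix if $K_A\ne\{0\}$ and there exists $d$ in the interior of $K_A^*$ such that both LCP$(A,K_A,0)$ and LCP$(A,K_A,d)$ have $x=0$ as their only solution. *)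

theory Defs
  imports "HOL-Analysis.Analysis"
begin

text \<open>Componentwise nonnegativity of a vector (x \<ge> 0).\<close>
definition nonneg_vec :: "real^'n \<Rightarrow> bool" where
  "nonneg_vec x \<longleftrightarrow> (\<forall>i. 0 \<le> x $ i)"

text \<open>Moore--Penrose inverse: the unique X satisfying the four Penrose equations.\<close>
definition is_moore_penrose :: "real^'n^'m \<Rightarrow> real^'m^'n \<Rightarrow> bool" where
  "is_moore_penrose A X \<longleftrightarrow>
     A ** X ** A = A \<and> X ** A ** X = X \<and>
     transpose (A ** X) = A ** X \<and> transpose (X ** A) = X ** A"

definition mp_inverse :: "real^'n^'m \<Rightarrow> real^'m^'n" where
  "mp_inverse A = (THE X. is_moore_penrose A X)"

text \<open>Row monotone: M x \<ge> 0 and x \<in> R(M^T) imply x \<ge> 0.\<close>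
definition row_monotone :: "real^'n^'n \<Rightarrow> bool" where
  "row_monotone M \<longleftrightarrow>
     (\<forall>x. nonneg_vec (M *v x) \<and> x \<in> range ((*v) (transpose M)) \<longrightarrow> nonneg_vec x)"

text \<open>K_A = R^n_+ \<inter> R(A).\<close>
definition K_cone :: "real^'n^'n \<Rightarrow> (real^'n) set" where
  "K_cone A = {x. nonneg_vec x} \<inter> range ((*v) A)"

text \<open>Dual cone K_A^*.\<close>
definition K_dual :: "real^'n^'n \<Rightarrow> (real^'n) set" where
  "K_dual A = {y. \<forall>x\<in>K_cone A. 0 \<le> x \<bullet> y}"

text \<open>x solves LCP(A, K_A, q).\<close>
definition LCP_sol :: "real^'n^'n \<Rightarrow> real^'n \<Rightarrow> real^'n \<Rightarrow> bool" where
  "LCP_sol A q x \<longleftrightarrow>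
     x \<in> K_cone A \<and> A *v x + q \<in> K_dual A \<and> x \<bullet> (A *v x + q) = 0"

definition karamardian :: "real^'n^'n \<Rightarrow> bool" where
  "karamardian A \<longleftrightarrow> K_cone A \<noteq> {0} \<and>
     (\<exists>d\<in>interior (K_dual A).
        (\<forall>x. LCP_sol A 0 x \<longrightarrow> x = 0) \<and> (\<forall>x. LCP_sol A d x \<longrightarrow> x = 0))"

end

theory Submission
  imports Defs
begin


definition outer :: "real^'n \<Rightarrow> real^'m \<Rightarrow> real^'m^'n" where
  "outer u v = (\<chi> i j. u$i * v$j)"

lemma outer_mv: "outer u v *v x = (v \<bullet> x) *\<^sub>R u"
  by (simp add: vec_eq_iff outer_def matrix_vector_mult_def inner_vec_def sum_distrib_left algebra_simps)

lemma outer_tr: "transpose (outer u v) = outer v u"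
  by (simp add: vec_eq_iff outer_def transpose_def)

lemma outer_mul: "outer a b ** outer c d = outer ((b \<bullet> c) *\<^sub>R a) d"
  by (simp add: vec_eq_iff outer_def matrix_matrix_mult_def inner_vec_def sum_distrib_left sum_distrib_right algebra_simps)

lemma outer_scale: "outer (k *\<^sub>R a) b = outer a (k *\<^sub>R b)"
  by (simp add: vec_eq_iff outer_def)

lemma outer_scale2: "k *\<^sub>R outer a b = outer (k *\<^sub>R a) b"
  by (simp add: vec_eq_iff outer_def)

lemma mp_unique:
  fixes A :: "real^'n^'m"
  assumes X: "is_moore_penrose A X" and Y: "is_moore_penrose A Y"
  shows "X = Y"
proof -
  have x1: "A ** X ** A = A" "X ** A ** X = X" "transpose (A ** X) = A ** X" "transpose (X ** A) = X ** A"
    using X by (auto simp: is_moore_penrose_def)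
  have y1: "A ** Y ** A = A" "Y ** A ** Y = Y" "transpose (A ** Y) = A ** Y" "transpose (Y ** A) = Y ** A"
    using Y by (auto simp: is_moore_penrose_def)
  have "X = X ** (A ** X)" using x1 by (simp add: matrix_mul_assoc)
  also have "\<dots> = X ** transpose (A ** X)" using x1 by simp
  also have "\<dots> = X ** (transpose X ** transpose A)" by (simp add: matrix_transpose_mul)
  also have "transpose A = transpose (A ** Y ** A)" using y1 by simp
  also have "\<dots> = transpose A ** (transpose Y ** transpose A)" by (simp add: matrix_transpose_mul)
  also have "X ** (transpose X ** (transpose A ** (transpose Y ** transpose A)))
      = X ** (transpose (A ** X) ** transpose (A ** Y))" by (simp add: matrix_transpose_mul matrix_mul_assoc)
  also have "\<dots> = X ** A ** X ** A ** Y" using x1 y1 by (simp add: matrix_mul_assoc)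
  also have "\<dots> = X ** A ** Y" using x1 by simp
  finally have eX: "X = X ** A ** Y" .
  have "Y = (Y ** A) ** Y" using y1 by simp
  also have "\<dots> = transpose (Y ** A) ** Y" using y1 by simp
  also have "\<dots> = (transpose A ** transpose Y) ** Y" by (simp add: matrix_transpose_mul)
  also have "transpose A = transpose (A ** X ** A)" using x1 by simp
  also have "\<dots> = (transpose A ** transpose X) ** transpose A" by (simp add: matrix_transpose_mul matrix_mul_assoc)
  also have "((transpose A ** transpose X) ** transpose A) ** transpose Y ** Y
      = (transpose (X ** A) ** transpose (Y ** A)) ** Y" by (simp add: matrix_transpose_mul matrix_mul_assoc)
  also have "\<dots> = X ** A ** Y ** A ** Y" using x1 y1 by (simp add: matrix_mul_assoc)
  also have "\<dots> = X ** A ** Y" using y1 by (metis matrix_mul_assoc)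
  finally show ?thesis using eX by simp
qed

lemma mp_outer:
  fixes u v :: "real^'n"
  assumes "u \<noteq> 0" "v \<noteq> 0"
  shows "mp_inverse (outer u v) = (1 / ((u \<bullet> u) * (v \<bullet> v))) *\<^sub>R outer v u"
proof -
  let ?k = "1 / ((u \<bullet> u) * (v \<bullet> v))"
  have uu: "u \<bullet> u > 0" "v \<bullet> v > 0" using assms by auto
  have "is_moore_penrose (outer u v) (?k *\<^sub>R outer v u)"
    unfolding is_moore_penrose_def outer_scale2 outer_mul outer_tr
    using uu by (auto simp: outer_scale scaleR_scaleR inner_scaleR_left inner_scaleR_right field_simps)
  then show ?thesis unfolding mp_inverse_def using mp_unique by blast
qed


lemma rank1_decomp:
  fixes A :: "real^'n^'n"
  assumes "rank A = 1"
  obtains u v where "u \<noteq> 0" "v \<noteq> 0" "A = outer u v"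
proof -
  obtain B where B: "B \<subseteq> range ((*v) A)" "independent B" "range ((*v) A) \<subseteq> span B"
      "card B = dim (range ((*v) A))"
    using basis_exists by blast
  then have "card B = 1" using assms rank_dim_range[of A] by simp
  then obtain u where Bu: "B = {u}" using card_1_singletonE by blast
  have u0: "u \<noteq> 0" using B(2) Bu by auto
  have "\<forall>j. \<exists>c. A *v axis j 1 = c *\<^sub>R u"
    using B(3) Bu by (auto simp: span_singleton)
  then obtain c where c: "\<And>j. A *v axis j 1 = c j *\<^sub>R u" by metis
  define v where "v = (\<chi> j. c j)"
  have Ae: "A = outer u v"
  proof -
    have "A $ i $ j = u $ i * v $ j" for i j
    proof -
      have "A $ i $ j = (A *v axis j 1) $ i"
        by (simp add: matrix_vector_mult_basis column_def)
      then show ?thesis by (simp add: c v_def)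
    qed
    then show ?thesis by (simp add: vec_eq_iff outer_def)
  qed
  have "v \<noteq> 0"
  proof
    assume "v = 0"
    then have "A = 0" using Ae by (simp add: vec_eq_iff outer_def)
    then show False using assms by simp
  qed
  then show ?thesis using that u0 Ae by blast
qed

lemma K_dual_scale: "y \<in> K_dual A \<Longrightarrow> 0 \<le> r \<Longrightarrow> r *\<^sub>R y \<in> K_dual A"
  by (auto simp: K_dual_def)

lemma K_cone_scale:
  fixes A :: "real^'n^'n"
  assumes "c \<noteq> 0" shows "K_cone (c *\<^sub>R A) = K_cone A"
proof -
  have "range ((*v) (c *\<^sub>R A)) = range ((*v) A)"
  proof (intro set_eqI iffI)
    fix y assume "y \<in> range ((*v) (c *\<^sub>R A))"
    then obtain x where "y = (c *\<^sub>R A) *v x" by auto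
    then have "y = A *v (c *\<^sub>R x)" by (simp add: scaleR_matrix_vector_assoc[symmetric] matrix_vector_mult_scaleR)
    then show "y \<in> range ((*v) A)" by auto
  next
    fix y assume "y \<in> range ((*v) A)"
    then obtain x where "y = A *v x" by auto
    then have "y = (c *\<^sub>R A) *v ((1/c) *\<^sub>R x)" using assms
      by (simp add: scaleR_matrix_vector_assoc[symmetric] matrix_vector_mult_scaleR)
    then show "y \<in> range ((*v) (c *\<^sub>R A))" by auto
  qed
  then show ?thesis by (simp add: K_cone_def)
qed

lemma LCP_scale:
  fixes A :: "real^'n^'n"
  assumes "c > 0"
  shows "LCP_sol (c *\<^sub>R A) (c *\<^sub>R q) x \<longleftrightarrow> LCP_sol A q x"
proof -
  have e: "(c *\<^sub>R A) *v x + c *\<^sub>R q = c *\<^sub>R (A *v x + q)"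
    by (simp add: scaleR_matrix_vector_assoc[symmetric] scaleR_add_right)
  have d: "c *\<^sub>R y \<in> K_dual A \<longleftrightarrow> y \<in> K_dual A" for y
    using K_dual_scale[of "c *\<^sub>R y" A "1/c"] K_dual_scale[of y A c] assms by auto
  show ?thesis unfolding LCP_sol_def K_dual_def[symmetric] e K_cone_scale[OF less_imp_neq[OF assms, symmetric]]
    using assms d by (auto simp: K_dual_def K_cone_scale)
qed

lemma interior_scale:
  fixes d :: "'a::real_normed_vector"
  assumes "d \<in> interior S" "c > 0" "\<And>y r. y \<in> S \<Longrightarrow> 0 \<le> r \<Longrightarrow> r *\<^sub>R y \<in> S"
  shows "c *\<^sub>R d \<in> interior S"
proof -
  obtain e where e: "e > 0" "ball d e \<subseteq> S" using assms(1) mem_interior by blast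
  have "ball (c *\<^sub>R d) (c * e) \<subseteq> S"
  proof
    fix y assume "y \<in> ball (c *\<^sub>R d) (c * e)"
    then have "norm (c *\<^sub>R d - y) < c * e" by (simp add: dist_norm)
    moreover have "c *\<^sub>R d - y = c *\<^sub>R (d - (1/c) *\<^sub>R y)" using assms(2) by (simp add: algebra_simps)
    ultimately have "c * norm (d - (1/c) *\<^sub>R y) < c * e" using assms(2) by simp
    then have "(1/c) *\<^sub>R y \<in> ball d e" using assms(2) by (simp add: dist_norm)
    then have "(1/c) *\<^sub>R y \<in> S" using e by auto
    from assms(3)[OF this, of c] assms(2) show "y \<in> S" by simp
  qed
  then show ?thesis using mem_interior e assms(2) by (meson mult_pos_pos)
qed

lemma kar_scale1:
  fixes A :: "real^'n^'n"
  assumes "c > 0" "karamardian A" shows "karamardian (c *\<^sub>R A)"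
proof -
  obtain d where d: "d \<in> interior (K_dual A)" "\<forall>x. LCP_sol A 0 x \<longrightarrow> x = 0" "\<forall>x. LCP_sol A d x \<longrightarrow> x = 0"
    and K: "K_cone A \<noteq> {0}" using assms(2) by (auto simp: karamardian_def)
  have KD: "K_dual (c *\<^sub>R A) = K_dual A" using assms(1) by (simp add: K_dual_def K_cone_scale)
  have "c *\<^sub>R d \<in> interior (K_dual (c *\<^sub>R A))" unfolding KD
    by (rule interior_scale[OF d(1) assms(1)]) (rule K_dual_scale)
  moreover have "\<forall>x. LCP_sol (c *\<^sub>R A) 0 x \<longrightarrow> x = 0" using d(2) LCP_scale[OF assms(1), of A 0] by simp
  moreover have "\<forall>x. LCP_sol (c *\<^sub>R A) (c *\<^sub>R d) x \<longrightarrow> x = 0" using d(3) LCP_scale[OF assms(1), of A d] by simp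
  ultimately show ?thesis using K assms(1) by (auto simp: karamardian_def K_cone_scale)
qed

lemma kar_scale:
  fixes A :: "real^'n^'n"
  assumes "c > 0" shows "karamardian (c *\<^sub>R A) \<longleftrightarrow> karamardian A"
  using kar_scale1[OF assms] kar_scale1[of "1/c" "c *\<^sub>R A"] assms by auto

lemma rowmono_scale:
  fixes M :: "real^'n^'n"
  assumes "c > 0" "row_monotone M" shows "row_monotone (c *\<^sub>R M)"
  unfolding row_monotone_def
proof (intro allI impI)
  fix x assume h: "nonneg_vec ((c *\<^sub>R M) *v x) \<and> x \<in> range ((*v) (transpose (c *\<^sub>R M)))"
  have "nonneg_vec (M *v x)"
    using h assms(1) by (auto simp: nonneg_vec_def scaleR_matrix_vector_assoc[symmetric] zero_le_mult_iff)
  moreover have "x \<in> range ((*v) (transpose M))"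
  proof -
    obtain y where "x = transpose (c *\<^sub>R M) *v y" using h by auto
    then have "x = transpose M *v (c *\<^sub>R y)"
      by (simp add: transpose_scalar scaleR_matrix_vector_assoc[symmetric] matrix_vector_mult_scaleR)
    then show ?thesis by auto
  qed
  ultimately show "nonneg_vec x" using assms(2) by (auto simp: row_monotone_def)
qed


lemma core:
  fixes A M :: "real^'n^'n" and w v :: "real^'n"
  assumes wn: "nonneg_vec w" and w0: "w \<noteq> 0"
    and Ax: "\<And>x. A *v x = (v \<bullet> x) *\<^sub>R w" and Mx: "\<And>x. M *v x = (w \<bullet> x) *\<^sub>R v"
    and MA: "transpose M = A" and K: "karamardian A"
  shows "row_monotone M"
proof -
  obtain d where d: "d \<in> interior (K_dual A)" "\<forall>x. LCP_sol A 0 x \<longrightarrow> x = 0" "\<forall>x. LCP_sol A d x \<longrightarrow> x = 0"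
    and Kn: "K_cone A \<noteq> {0}"
    using K by (auto simp: karamardian_def)
  have ww: "w \<bullet> w > 0" using w0 by simp
  have v0: "v \<noteq> 0"
  proof
    assume "v = 0"
    then have "K_cone A \<subseteq> {0}" by (auto simp: K_cone_def Ax)
    moreover have "(0::real^'n) \<in> range ((*v) A)" by (metis matrix_vector_mult_0_right rangeI)
    then have "0 \<in> K_cone A" by (simp add: K_cone_def nonneg_vec_def)
    ultimately show False using Kn by blast
  qed
  have vv: "v \<bullet> v > 0" using v0 by simp
  have inR: "t *\<^sub>R w \<in> range ((*v) A)" for t
  proof -
    have "A *v ((t / (v \<bullet> v)) *\<^sub>R v) = t *\<^sub>R w" using vv by (simp add: Ax)
    then show ?thesis by (metis rangeI)
  qed
  have wK: "w \<in> K_cone A" using inR[of 1] wn by (simp add: K_cone_def)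
  have rK: "\<exists>t. z = t *\<^sub>R w" if "z \<in> range ((*v) A)" for z
    using that by (auto simp: Ax)
  have vw: "v \<bullet> w > 0"
  proof (rule ccontr)
    assume "\<not> v \<bullet> w > 0"
    then consider "v \<bullet> w = 0" | "v \<bullet> w < 0" by linarith
    then show False
    proof cases
      case 1
      have "LCP_sol A 0 w" using wK 1 by (simp add: LCP_sol_def Ax K_dual_def)
      then show False using d(2) w0 by blast
    next
      case 2
      obtain e where e: "e > 0" "ball d e \<subseteq> K_dual A" using d(1) mem_interior by blast
      define t where "t = e / (2 * norm w)"
      have t0: "t > 0" using e w0 by (simp add: t_def)
      have "d - t *\<^sub>R w \<in> ball d e"
        using e w0 by (simp add: dist_norm t_def)
      then have "d - t *\<^sub>R w \<in> K_dual A" using e by blast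
      then have "0 \<le> w \<bullet> (d - t *\<^sub>R w)" using wK by (auto simp: K_dual_def)
      moreover have "t * (w \<bullet> w) > 0" using t0 ww by simp
      ultimately have wd: "w \<bullet> d > 0" by (simp add: inner_diff_right)
      define s where "s = (w \<bullet> d) / (- (v \<bullet> w) * (w \<bullet> w))"
      have "- (v \<bullet> w) * (w \<bullet> w) > 0" using mult_neg_pos[OF 2 ww] by simp
      then have s0: "s > 0" unfolding s_def using wd by (rule divide_pos_pos[rotated])
      have key: "s * (v \<bullet> w) * (w \<bullet> w) + w \<bullet> d = 0"
        using 2 ww by (simp add: s_def field_simps)
      have "LCP_sol A d (s *\<^sub>R w)"
        unfolding LCP_sol_def
      proof (intro conjI)
        show "s *\<^sub>R w \<in> K_cone A" using inR[of s] wn s0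
          by (auto simp: K_cone_def nonneg_vec_def)
        show "A *v (s *\<^sub>R w) + d \<in> K_dual A"
          unfolding K_dual_def
        proof (intro CollectI ballI)
          fix z assume "z \<in> K_cone A"
          then obtain r where "z = r *\<^sub>R w" using rK by (auto simp: K_cone_def)
          then have "z \<bullet> (A *v (s *\<^sub>R w) + d) = r * (s * (v \<bullet> w) * (w \<bullet> w) + w \<bullet> d)"
            by (simp add: Ax inner_add_right algebra_simps)
          then show "0 \<le> z \<bullet> (A *v (s *\<^sub>R w) + d)" using key by simp
        qed
        have "(s *\<^sub>R w) \<bullet> (A *v (s *\<^sub>R w) + d) = s * (s * (v \<bullet> w) * (w \<bullet> w) + w \<bullet> d)"
          by (simp add: Ax inner_add_right algebra_simps)
        then show "(s *\<^sub>R w) \<bullet> (A *v (s *\<^sub>R w) + d) = 0" using key by simp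
      qed
      then have "s *\<^sub>R w = 0" using d(3) by blast
      then show False using s0 w0 by simp
    qed
  qed
  show ?thesis unfolding row_monotone_def
  proof (intro allI impI)
    fix x assume h: "nonneg_vec (M *v x) \<and> x \<in> range ((*v) (transpose M))"
    then obtain t where xt: "x = t *\<^sub>R w" using rK MA by auto
    have Mx': "M *v x = (t * (w \<bullet> w)) *\<^sub>R v" by (simp add: Mx xt)
    have "t \<ge> 0"
    proof (rule ccontr)
      assume "\<not> t \<ge> 0"
      then have neg: "t * (w \<bullet> w) < 0" using ww by (simp add: mult_neg_pos)
      have "\<forall>i. v $ i \<le> 0"
      proof
        fix i have "0 \<le> t * (w \<bullet> w) * v $ i" using h Mx' by (auto simp: nonneg_vec_def)
        show "v $ i \<le> 0"
        proof (rule ccontr)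
          assume "\<not> v $ i \<le> 0"
          then have "t * (w \<bullet> w) * v $ i < 0" using mult_neg_pos[OF neg] by simp
          then show False using \<open>0 \<le> t * (w \<bullet> w) * v $ i\<close> by simp
        qed
      qed
      then have "\<forall>i. v $ i * w $ i \<le> 0" using wn unfolding nonneg_vec_def
        by (simp add: mult_nonpos_nonneg)
      then have "v \<bullet> w \<le> 0" unfolding inner_vec_def inner_real_def
        by (simp add: sum_nonpos)
      then show False using vw by simp
    qed
    then show "nonneg_vec x" using wn xt by (auto simp: nonneg_vec_def)
  qed
qed


theorem mainTheorem8:
  fixes A :: "real^'n^'n"
  assumes "rank A = 1"
  shows "(karamardian A \<longleftrightarrow> karamardian (transpose (mp_inverse A))) \<and>
         (karamardian A \<longrightarrow> row_monotone (transpose A) \<and> row_monotone (mp_inverse A))"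
proof -
  obtain u v :: "real^'n" where u0: "u \<noteq> 0" and v0: "v \<noteq> 0" and Ae: "A = outer u v"
    using rank1_decomp[OF assms] by blast
  define k where "k = 1 / ((u \<bullet> u) * (v \<bullet> v))"
  have k0: "k > 0" using u0 v0 by (simp add: k_def)
  have mp: "mp_inverse A = k *\<^sub>R outer v u" using mp_outer[OF u0 v0] by (simp add: Ae k_def)
  have tmp: "transpose (mp_inverse A) = k *\<^sub>R A" unfolding mp by (simp add: transpose_scalar outer_tr Ae)
  have p1: "karamardian A \<longleftrightarrow> karamardian (transpose (mp_inverse A))"
    using kar_scale[OF k0, of A] tmp by simp
  have p2: "row_monotone (transpose A) \<and> row_monotone (mp_inverse A)" if K: "karamardian A"
  proof -
    have "K_cone A \<noteq> {0}" using K by (simp add: karamardian_def)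
    moreover have "0 \<in> K_cone A"
    proof -
      have "(0::real^'n) \<in> range ((*v) A)" by (metis matrix_vector_mult_0_right rangeI)
      then show ?thesis by (simp add: K_cone_def nonneg_vec_def)
    qed
    ultimately obtain z where z: "z \<in> K_cone A" "z \<noteq> 0" by blast
    then obtain y where zy: "z = A *v y" and zn: "nonneg_vec z" by (auto simp: K_cone_def)
    define a where "a = v \<bullet> y"
    have za: "z = a *\<^sub>R u" by (simp add: zy Ae outer_mv a_def)
    have a0: "a \<noteq> 0" using z(2) za by auto
    define v' where "v' = (1 / a) *\<^sub>R v"
    have Ax: "A *v x = (v' \<bullet> x) *\<^sub>R z" for x
      using a0 by (simp add: Ae outer_mv za v'_def)
    have Mx: "outer v u *v x = (z \<bullet> x) *\<^sub>R v'" for x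
      using a0 by (simp add: outer_mv za v'_def)
    have tA: "transpose A = outer v u" by (simp add: Ae outer_tr)
    have rm: "row_monotone (outer v u)"
      by (rule core[OF zn z(2) Ax Mx _ K]) (simp add: tA[symmetric])
    show ?thesis using rm tA mp rowmono_scale[OF k0 rm] by simp
  qed
  show ?thesis using p1 p2 by blast
qed

end
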